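(* Let $\Omega\subseteq\mathbb{C}$ be an open disc centered at the origin, $M:\Omega\to\mathbb{C}^{n\times n}$ analytic with $M(0)$ invertible, written as $M(\lambda)=\sum_{i=1}^mM_if_i(\lambda)$ with $f_i$ scalar analytic on $\Omega$, and let $\mathcal{B}$ be the operator defined in the context. Let $Y\in\mathbb{C}^{n\times p}$ and $S\in\mathbb{C}^{p\times p}$ with $S$ invertible and $\sigma(S)\subset\Omega$, and let $F(\theta):=Y\exp(\theta S)$. Then for all $\theta$, $$(\mathcal{B}F)(\theta)-F(\theta)S^{-1}=-M(0)^{-1}\mathbb{M}(Y,S)S^{-1},$$ where $\mathbb{M}(Y,S):=\sum_{i=1}^mM_iYf_i(S)$.
   Context: $B(\lambda)=M(0)^{-1}\frac{M(0)-M(\lambda)}{\lambda}$ for $\lambda\ne0$, extended analytically to $0$. $\mathcal{B}$ acts on smooth $\varphi:\mathbb{R}\to\mathbb{C}^n$ (for which the series converges) by $(\mathcal{B}\varphi)(\theta)=\int_0^\theta\varphi(\hat\theta)d\hat\theta+\sum_{i=0}^\infty\frac{1}{i!}B^{(i)}(0)\varphi^{(i)}(0)$, applied columnwise to matrix-valued functions. $f_i(S)$ denotes the matrix function. *)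

theory Defs
  imports "HOL-Complex_Analysis.Complex_Analysis"
begin

text \<open>Complex matrices are represented as complex^'cols^'rows (HOL-Analysis);
  the dimensions n, p are finite type variables.\<close>

definition msc :: "complex \<Rightarrow> complex^'b^'a \<Rightarrow> complex^'b^'a" where
  "msc c A = (\<chi> i j. c * A$i$j)"

primrec mpow :: "complex^'p^'p \<Rightarrow> nat \<Rightarrow> complex^'p^'p" where
  "mpow A 0 = mat 1"
| "mpow A (Suc k) = A ** mpow A k"

definition spec :: "complex^'p^'p \<Rightarrow> complex set" where
  "spec S = {c. \<exists>v. v \<noteq> 0 \<and> S *v v = c *s v}"

text \<open>Matrix function f(S) of a scalar function f analytic on a disc centred at 0
  containing the spectrum of S, given by its (convergent) Taylor series at 0.\<close>
definition matfun :: "(complex \<Rightarrow> complex) \<Rightarrow> complex^'p^'p \<Rightarrow> complex^'p^'p" where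
  "matfun f S = (\<Sum>k. msc ((deriv ^^ k) f 0 / fact k) (mpow S k))"

definition mexp :: "complex^'p^'p \<Rightarrow> complex^'p^'p" where
  "mexp S = (\<Sum>k. msc (1 / fact k) (mpow S k))"

definition Mfun :: "(nat \<Rightarrow> complex^'n^'n) \<Rightarrow> (nat \<Rightarrow> complex \<Rightarrow> complex) \<Rightarrow> nat
    \<Rightarrow> complex \<Rightarrow> complex^'n^'n" where
  "Mfun Ms f m z = (\<Sum>i<m. msc (f i z) (Ms i))"

definition Bfn :: "(complex \<Rightarrow> complex^'n^'n) \<Rightarrow> complex \<Rightarrow> complex^'n^'n" where
  "Bfn M z = (if z = 0
     then Lim (at 0) (\<lambda>w. matrix_inv (M 0) ** msc (1 / w) (M 0 - M w))
     else matrix_inv (M 0) ** msc (1 / z) (M 0 - M z))"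

definition mder0 :: "(complex \<Rightarrow> complex^'b^'a) \<Rightarrow> nat \<Rightarrow> complex^'b^'a" where
  "mder0 B i = (\<chi> j k. (deriv ^^ i) (\<lambda>z. B z $ j $ k) 0)"

definition vder :: "nat \<Rightarrow> (real \<Rightarrow> complex^'b^'a) \<Rightarrow> real \<Rightarrow> complex^'b^'a" where
  "vder i \<phi> = ((\<lambda>g t. vector_derivative g (at t)) ^^ i) \<phi>"

definition int0 :: "(real \<Rightarrow> complex^'b^'a) \<Rightarrow> real \<Rightarrow> complex^'b^'a" where
  "int0 \<phi> \<theta> = (if 0 \<le> \<theta> then integral {0..\<theta>} \<phi> else - integral {\<theta>..0} \<phi>)"

text \<open>The operator \<B> (applied columnwise = via matrix products).\<close>
definition Bop :: "(complex \<Rightarrow> complex^'n^'n) \<Rightarrow> (real \<Rightarrow> complex^'c^'n) \<Rightarrow> real \<Rightarrow> complex^'c^'n" where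
  "Bop B \<phi> \<theta> = int0 \<phi> \<theta> + (\<Sum>i. msc (1 / fact i) (mder0 B i ** vder i \<phi> 0))"

end

theory Submission
  imports Defs
begin

no_notation fps_nth (infixl \<open>$\<close> 75)

lemma msc_nth [simp]: "msc c A $ j $ l = c * A $ j $ l"
  by (simp add: msc_def)

lemma matrix_mult_nth: "(A ** B) $ i $ j = (\<Sum>k\<in>UNIV. A $ i $ k * B $ k $ j)"
  by (simp add: matrix_matrix_mult_def)

lemma msc_mult_left: "msc c A ** B = msc c (A ** B)"
  by (simp add: vec_eq_iff matrix_mult_nth sum_distrib_left mult.assoc)

lemma msc_mult_right: "(A::complex^'b^'a) ** msc c B = msc c (A ** B)"
  by (simp add: vec_eq_iff matrix_mult_nth sum_distrib_left mult.left_commute)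

lemma msc_msc [simp]: "msc a (msc b A) = msc (a*b) A"
  by (simp add: vec_eq_iff mult.assoc)

lemma msc_add: "msc c (A + B) = msc c A + msc c B"
  by (simp add: vec_eq_iff distrib_left)

lemma msc_add_left: "msc (a + b) A = msc a A + msc b A"
  by (simp add: vec_eq_iff distrib_right)

lemma msc_diff: "msc c (A - B) = msc c A - msc c B"
  by (simp add: vec_eq_iff right_diff_distrib)

lemma msc_minus: "msc c (- A) = - msc c A"
  by (simp add: vec_eq_iff)

lemma msc_one [simp]: "msc 1 A = A"
  by (simp add: vec_eq_iff)

lemma msc_zero [simp]: "msc 0 A = 0"
  by (simp add: vec_eq_iff)

lemma msc_zero_right [simp]: "msc c 0 = 0"
  by (simp add: vec_eq_iff)

lemma msc_sum: "msc c (\<Sum>l\<in>L. A l) = (\<Sum>l\<in>L. msc c (A l))"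
  by (induct L rule: infinite_finite_induct) (auto simp: msc_add)

lemma msc_of_real: "msc (of_real x) A = x *\<^sub>R A"
  by (simp add: vec_eq_iff scaleR_conv_of_real[symmetric])

lemma mpow_Suc': "mpow A (Suc k) = mpow A k ** A"
  by (induct k) (simp_all add: matrix_mul_assoc)

lemma mpow_msc: "mpow (msc c A) k = msc (c ^ k) (mpow A k)"
  by (induct k) (simp_all add: msc_mult_left msc_mult_right mult.commute)

lemma matrix_add_rdistrib': "((B::'a::semiring_1^_^_) + C) ** A = B ** A + C ** A"
  by (simp add: vec_eq_iff matrix_matrix_mult_def sum.distrib distrib_right)

lemma matrix_mul_sum_right: "(A::'a::semiring_1^_^_) ** (\<Sum>l\<in>L. B l) = (\<Sum>l\<in>L. A ** B l)"
  by (induct L rule: infinite_finite_induct) (auto simp: matrix_add_ldistrib)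

lemma matrix_mul_sum_left: "(\<Sum>l\<in>L. B l) ** (A::'a::semiring_1^_^_) = (\<Sum>l\<in>L. B l ** A)"
  by (induct L rule: infinite_finite_induct) (auto simp: matrix_add_rdistrib')

lemma matrix_mul_diff_right: "(A::'a::ring_1^_^_) ** (B - C) = A ** B - A ** C"
  by (simp add: vec_eq_iff matrix_mult_nth sum_subtractf right_diff_distrib)

lemma matrix_mul_diff_left: "((B::'a::ring_1^_^_) - C) ** A = B ** A - C ** A"
  by (simp add: vec_eq_iff matrix_mult_nth sum_subtractf left_diff_distrib)

lemma matrix_mul_minus_right: "(A::'a::ring_1^_^_) ** (- B) = - (A ** B)"
  by (simp add: vec_eq_iff matrix_mult_nth sum_negf)

lemma matrix_mul_minus_left: "(- B::'a::ring_1^_^_) ** A = - (B ** A)"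
  by (simp add: vec_eq_iff matrix_mult_nth sum_negf)

lemma bl_mult_left: "bounded_linear (\<lambda>A::complex^'c^'b. (X::complex^'b^'a) ** A)"
proof -
  have "linear (\<lambda>A::complex^'c^'b. X ** A)"
    by (rule linearI) (simp_all add: matrix_add_ldistrib flip: msc_of_real add: msc_mult_right)
  then show ?thesis by (simp add: linear_conv_bounded_linear)
qed

lemma bl_mult_right: "bounded_linear (\<lambda>A::complex^'b^'a. A ** (X::complex^'c^'b))"
proof -
  have "linear (\<lambda>A::complex^'b^'a. A ** X)"
    by (rule linearI) (simp_all add: matrix_add_rdistrib' flip: msc_of_real add: msc_mult_left)
  then show ?thesis by (simp add: linear_conv_bounded_linear)
qed

lemma bl_msc: "bounded_linear (\<lambda>A::complex^'b^'a. msc c A)"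
proof -
  have "linear (\<lambda>A::complex^'b^'a. msc c A)"
    by (rule linearI) (simp_all add: msc_add mult.commute flip: msc_of_real)
  then show ?thesis by (simp add: linear_conv_bounded_linear)
qed

lemma bl_nth2: "bounded_linear (\<lambda>A::complex^'b^'a. A $ j $ l)"
  using bounded_linear_compose[OF bounded_linear_vec_nth bounded_linear_vec_nth] .

definition nu :: "complex^'b^'a \<Rightarrow> real" where
  "nu A = (\<Sum>j\<in>UNIV. \<Sum>l\<in>UNIV. norm (A $ j $ l))"

lemma nu_nonneg: "0 \<le> nu A"
  by (simp add: nu_def sum_nonneg)

lemma norm_entry_le_nu: "norm (A $ j $ l) \<le> nu A"
proof -
  have "norm (A $ j $ l) \<le> (\<Sum>l\<in>UNIV. norm (A $ j $ l))"
    by (rule member_le_sum) auto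
  also have "\<dots> \<le> nu A" unfolding nu_def
    by (rule member_le_sum) (auto intro: sum_nonneg)
  finally show ?thesis .
qed

lemma norm_vec_le_sum: "norm (x::'a::real_normed_vector^'n) \<le> (\<Sum>i\<in>UNIV. norm (x $ i))"
  unfolding norm_vec_def by (rule L2_set_le_sum) auto

lemma norm_le_nu: "norm A \<le> nu A"
proof -
  have "norm A \<le> (\<Sum>j\<in>UNIV. norm (A $ j))" by (rule norm_vec_le_sum)
  also have "\<dots> \<le> nu A" unfolding nu_def
    by (intro sum_mono norm_vec_le_sum)
  finally show ?thesis .
qed

lemma nu_msc: "nu (msc c A) = norm c * nu A"
  by (simp add: nu_def norm_mult sum_distrib_left)

lemma nu_mult: "nu ((A::complex^'b^'a) ** B) \<le> nu A * nu B"
proof -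
  define a where "a j = (\<Sum>k\<in>UNIV. norm (A $ j $ k))" for j
  define b where "b l = (\<Sum>k\<in>UNIV. norm (B $ k $ l))" for l
  have "nu (A ** B) = (\<Sum>j\<in>UNIV. \<Sum>l\<in>UNIV. norm (\<Sum>k\<in>UNIV. A $ j $ k * B $ k $ l))"
    by (simp add: nu_def matrix_mult_nth)
  also have "\<dots> \<le> (\<Sum>j\<in>UNIV. \<Sum>l\<in>UNIV. \<Sum>k\<in>UNIV. norm (A $ j $ k) * norm (B $ k $ l))"
    by (intro sum_mono order_trans[OF norm_sum]) (simp add: norm_mult)
  also have "\<dots> \<le> (\<Sum>j\<in>UNIV. \<Sum>l\<in>UNIV. \<Sum>k\<in>UNIV. norm (A $ j $ k) * b l)"
    unfolding b_def by (intro sum_mono mult_left_mono member_le_sum) auto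
  also have "\<dots> = (\<Sum>j\<in>UNIV. \<Sum>l\<in>UNIV. a j * b l)"
    by (simp add: a_def sum_distrib_right)
  also have "\<dots> = (\<Sum>j\<in>UNIV. a j) * (\<Sum>l\<in>UNIV. b l)"
    by (simp add: sum_product)
  also have "(\<Sum>l\<in>UNIV. b l) = nu B"
    unfolding b_def nu_def by (rule sum.swap)
  also have "(\<Sum>j\<in>UNIV. a j) = nu A" unfolding a_def nu_def ..
  finally show ?thesis .
qed

lemma summable_nu:
  assumes "summable (\<lambda>k. nu (F k))"
  shows "summable (F :: nat \<Rightarrow> complex^'b^'a)"
proof -
  have "summable (\<lambda>k. norm (F k))"
    by (rule summable_comparison_test'[OF assms]) (simp add: norm_le_nu)
  then show ?thesis by (rule summable_norm_cancel)
qed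

lemma suminf_nth2:
  assumes "summable (F :: nat \<Rightarrow> complex^'b^'a)"
  shows "(suminf F) $ j $ l = suminf (\<lambda>k. F k $ j $ l)"
  using bounded_linear.suminf[OF bl_nth2 assms] by simp

lemma inv_props:
  assumes "invertible (A::'a::field^'n^'n)"
  shows "A ** matrix_inv A = mat 1" "matrix_inv A ** A = mat 1"
proof -
  have "\<exists>A'. A ** A' = mat 1 \<and> A' ** A = mat 1" using assms by (simp add: invertible_def)
  then have "A ** matrix_inv A = mat 1 \<and> matrix_inv A ** A = mat 1"
    unfolding matrix_inv_def by (rule someI_ex)
  then show "A ** matrix_inv A = mat 1" "matrix_inv A ** A = mat 1" by auto
qed

lemma inv_unique:
  assumes "(A::'a::field^'n^'n) ** B = mat 1"
  shows "matrix_inv A = B"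
proof -
  have "B ** A = mat 1" using assms matrix_left_right_inverse by blast
  then have inv: "invertible A" using assms by (auto simp: invertible_def)
  have "matrix_inv A = matrix_inv A ** (A ** B)" by (simp add: assms)
  also have "\<dots> = B" by (simp add: matrix_mul_assoc inv_props[OF inv])
  finally show ?thesis .
qed

lemma msc_mvec: "msc c A *v v = c *s (A *v v)"
  by (simp add: vec_eq_iff matrix_vector_mult_def sum_distrib_left mult.assoc)

lemma norm_smult_vec: "norm ((c::complex) *s (v::complex^'n)) = norm c * norm v"
  by (simp add: norm_vec_def norm_mult L2_set_right_distrib)

lemma norm_mvec_le: "norm ((A::complex^'b^'a) *v x) \<le> nu A * norm x"
proof -
  have "norm (A *v x) \<le> (\<Sum>j\<in>UNIV. norm ((A *v x) $ j))" by (rule norm_vec_le_sum)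
  also have "\<dots> \<le> (\<Sum>j\<in>UNIV. \<Sum>l\<in>UNIV. norm (A $ j $ l) * norm x)"
    unfolding matrix_vector_mult_def
  proof (intro sum_mono)
    fix j
    have "norm (\<Sum>l\<in>UNIV. A $ j $ l * x $ l) \<le> (\<Sum>l\<in>UNIV. norm (A $ j $ l * x $ l))"
      by (rule norm_sum)
    also have "\<dots> \<le> (\<Sum>l\<in>UNIV. norm (A $ j $ l) * norm x)"
      by (intro sum_mono) (simp add: norm_mult mult_left_mono Finite_Cartesian_Product.norm_nth_le)
    finally show "norm ((\<chi> i. \<Sum>j\<in>UNIV. A $ i $ j * x $ j) $ j) \<le> (\<Sum>l\<in>UNIV. norm (A $ j $ l) * norm x)"
      by simp
  qed
  also have "\<dots> = nu A * norm x" by (simp add: nu_def sum_distrib_right)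
  finally show ?thesis .
qed

lemma spec_iff_det: "c \<in> spec (S::complex^'p^'p) \<longleftrightarrow> det (S - msc c (mat 1)) = 0"
proof -
  have eq: "(S - msc c (mat 1)) *v v = S *v v - c *s v" for v
    by (simp add: matrix_vector_mult_diff_rdistrib msc_mvec)
  have "c \<in> spec S \<longleftrightarrow> (\<exists>v. v \<noteq> 0 \<and> (S - msc c (mat 1)) *v v = 0)"
    by (simp add: spec_def eq)
  also have "\<dots> \<longleftrightarrow> \<not> (\<exists>B. B ** (S - msc c (mat 1)) = mat 1)"
    by (simp add: matrix_left_invertible_ker) blast
  also have "\<dots> \<longleftrightarrow> \<not> invertible (S - msc c (mat 1))"
    by (simp add: invertible_left_inverse)
  also have "\<dots> \<longleftrightarrow> det (S - msc c (mat 1)) = 0"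
    by (simp add: invertible_det_nz)
  finally show ?thesis .
qed

lemma spec_bounded_nu: "c \<in> spec (S::complex^'p^'p) \<Longrightarrow> norm c \<le> nu S"
proof -
  assume "c \<in> spec S"
  then obtain v where v: "v \<noteq> 0" "S *v v = c *s v" by (auto simp: spec_def)
  have "norm c * norm v = norm (S *v v)" by (simp add: v norm_smult_vec)
  also have "\<dots> \<le> nu S * norm v" by (rule norm_mvec_le)
  finally show ?thesis using v(1) by simp
qed

lemma spec_closed: "closed (spec (S::complex^'p^'p))"
proof -
  have "spec S = {c. det (S - msc c (mat 1)) = 0}" by (auto simp: spec_iff_det)
  moreover have "continuous_on UNIV (\<lambda>c. det (S - msc c (mat 1)))"
  proof -
    have "(\<lambda>c. det (S - msc c (mat 1))) = (\<lambda>c. \<Sum>p\<in>{p. p permutes (UNIV::'p set)}. of_int (sign p) * (\<Prod>i\<in>UNIV. S $ i $ p i - c * mat 1 $ i $ p i))"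
      by (simp add: det_def)
    then show ?thesis by (simp only:) (intro continuous_intros)
  qed
  ultimately show ?thesis
    by (simp add: closed_Collect_eq continuous_on_const)
qed

lemma spec_compact: "compact (spec (S::complex^'p^'p))"
proof -
  have "spec S \<subseteq> cball 0 (nu S)" using spec_bounded_nu by auto
  then have "bounded (spec S)" using bounded_cball bounded_subset by blast
  then show ?thesis using spec_closed compact_eq_bounded_closed by blast
qed

lemma spec_radius:
  assumes "spec (S::complex^'p^'p) \<subseteq> ball 0 r" "r > 0"
  obtains \<rho> where "0 \<le> \<rho>" "\<rho> < r" "\<And>c. c \<in> spec S \<Longrightarrow> norm c \<le> \<rho>"
proof (cases "spec S = {}")
  case True then show ?thesis using that[of 0] assms by auto
next
  case False
  obtain c0 where c0: "c0 \<in> spec S" "\<And>c. c \<in> spec S \<Longrightarrow> norm c \<le> norm c0"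
    using continuous_attains_sup[OF spec_compact False, of norm] by (auto intro: continuous_intros)
  show ?thesis using c0 assms by (intro that[of "norm c0"]) auto
qed

lemma nu_mat1: "nu (mat 1 :: complex^'p^'p) = of_nat CARD('p)"
proof -
  have e: "\<And>j l. cmod (mat 1 $ j $ l :: complex) = (if j = l then 1 else 0)" by (simp add: mat_def)
  show ?thesis by (simp add: nu_def e)
qed

lemma nu_mpow: "nu (mpow (S::complex^'p^'p) k) \<le> of_nat CARD('p) * nu S ^ k"
proof (induct k)
  case 0 then show ?case by (simp add: nu_mat1)
next
  case (Suc k)
  have "nu (mpow S (Suc k)) \<le> nu S * nu (mpow S k)" by (simp add: nu_mult)
  also have "\<dots> \<le> nu S * (of_nat CARD('p) * nu S ^ k)"
    by (intro mult_left_mono Suc nu_nonneg)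
  finally show ?case by (simp add: algebra_simps)
qed

lemma neumann:
  fixes S :: "complex^'p^'p"
  assumes "norm w * nu S < 1"
  shows "(\<lambda>k. msc (w^k) (mpow S k)) sums matrix_inv (mat 1 - msc w S)"
proof -
  define g where "g k = msc (w^k) (mpow S k)" for k
  have bnd: "nu (g k) \<le> of_nat CARD('p) * (norm w * nu S) ^ k" for k
  proof -
    have "nu (g k) = norm w ^ k * nu (mpow S k)" by (simp add: g_def nu_msc norm_power)
    also have "\<dots> \<le> norm w ^ k * (of_nat CARD('p) * nu S ^ k)"
      by (intro mult_left_mono nu_mpow) auto
    finally show ?thesis by (metis mult.left_commute power_mult_distrib)
  qed
  have sgeo: "summable (\<lambda>k. of_nat CARD('p) * (norm w * nu S) ^ k)"
    using assms by (intro summable_mult summable_geometric) (auto simp: nu_nonneg)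
  have sg: "summable g"
  proof (rule summable_nu)
    show "summable (\<lambda>k. nu (g k))"
      by (rule summable_comparison_test'[OF sgeo]) (simp add: nu_nonneg bnd)
  qed
  have step: "(mat 1 - msc w S) ** g k = g k - g (Suc k)" for k
    by (simp add: g_def matrix_mul_diff_left msc_mult_left msc_mult_right msc_diff mult.commute)
  have "g \<longlonglongrightarrow> 0" using sg by (rule summable_LIMSEQ_zero)
  then have "(\<lambda>k. g k - g (Suc k)) sums (g 0 - 0)" by (rule telescope_sums')
  moreover have "(\<lambda>k. (mat 1 - msc w S) ** g k) = (\<lambda>k. g k - g (Suc k))" by (simp only: step)
  moreover have "g 0 = mat 1" by (simp add: g_def)
  ultimately have "(\<lambda>k. (mat 1 - msc w S) ** g k) sums mat 1" by simp
  moreover have "(\<lambda>k. (mat 1 - msc w S) ** g k) sums ((mat 1 - msc w S) ** suminf g)"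
    using bounded_linear.sums[OF bl_mult_left summable_sums[OF sg]] .
  ultimately have "(mat 1 - msc w S) ** suminf g = mat 1" using sums_unique2 by blast
  then have "matrix_inv (mat 1 - msc w S) = suminf g" by (rule inv_unique)
  then show ?thesis using summable_sums[OF sg] unfolding g_def[abs_def] by simp
qed

lemma det0_iff: "det (B::complex^'p^'p) = 0 \<longleftrightarrow> (\<exists>v. v \<noteq> 0 \<and> B *v v = 0)"
proof -
  have "(\<exists>v. v \<noteq> 0 \<and> B *v v = 0) \<longleftrightarrow> \<not> (\<exists>C. C ** B = mat 1)"
    by (simp add: matrix_left_invertible_ker) blast
  also have "\<dots> \<longleftrightarrow> \<not> invertible B"
    by (simp add: invertible_left_inverse)
  also have "\<dots> \<longleftrightarrow> det B = 0"
    by (simp add: invertible_det_nz)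
  finally show ?thesis by simp
qed

lemma inv_entry_cramer:
  assumes "det (A::complex^'p^'p) \<noteq> 0"
  shows "matrix_inv A $ j $ l = det (\<chi> a b. if b = j then axis l 1 $ a else A $ a $ b) / det A"
proof -
  have inv: "invertible A" using assms invertible_det_nz by blast
  define x where "x = matrix_inv A *v axis l 1"
  have "A *v x = axis l 1"
    by (simp add: x_def matrix_vector_mul_assoc inv_props[OF inv])
  then have "x = (\<chi> k. det (\<chi> i j. if j = k then axis l 1 $ i else A $ i $ j) / det A)"
    using cramer[OF assms] by blast
  then have "x $ j = det (\<chi> a b. if b = j then axis l 1 $ a else A $ a $ b) / det A" by simp
  moreover have "x $ j = matrix_inv A $ j $ l"
  proof -
    have e: "\<And>m. matrix_inv A $ j $ m * axis l 1 $ m = (if m = l then matrix_inv A $ j $ l else 0)"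
      by (simp add: axis_def)
    show ?thesis by (simp add: x_def matrix_vector_mult_def e)
  qed
  ultimately show ?thesis by simp
qed

lemma det_holo:
  assumes "\<And>a b. (\<lambda>w. F w $ a $ b) holomorphic_on D"
  shows "(\<lambda>w. det (F w :: complex^'p^'p)) holomorphic_on D"
  unfolding det_def
  apply (rule holomorphic_on_sum)
  apply (rule holomorphic_on_mult)
   apply (rule holomorphic_on_const)
  apply (rule holomorphic_on_prod)
  apply (rule assms)
  done

lemma entry_bound:
  fixes S :: "complex^'p^'p"
  assumes rho: "0 \<le> \<rho>" "\<rho> < \<sigma>1" "\<sigma>1 < \<sigma>2" "\<And>c. c \<in> spec S \<Longrightarrow> norm c \<le> \<rho>"
  shows "\<exists>K. \<forall>n. norm (mpow S n $ j $ l) \<le> K * \<sigma>2 ^ n"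
proof -
  have s1: "\<sigma>1 > 0" using rho by linarith
  define D where "D = ball (0::complex) (1/\<sigma>1)"
  have detnz: "det (mat 1 - msc w S) \<noteq> 0" if w: "w \<in> D" for w
  proof
    assume "det (mat 1 - msc w S) = 0"
    then obtain v where v: "v \<noteq> 0" "(mat 1 - msc w S) *v v = 0" using det0_iff by blast
    then have vv: "v = w *s (S *v v)"
      by (simp add: matrix_vector_mult_diff_rdistrib msc_mvec)
    have w0: "w \<noteq> 0" using v vv by auto
    have "(1/w) *s v = S *v v"
      by (subst vv) (simp add: vector_smult_assoc w0)
    then have "1/w \<in> spec S" using v(1) by (auto simp: spec_def)
    then have "norm (1/w) \<le> \<rho>" by (rule rho(4))
    moreover have "norm w < 1/\<sigma>1" using w by (simp add: D_def)
    then have "\<sigma>1 < 1 / norm w" using s1 w0 by (simp add: field_simps)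
    ultimately show False using rho by (simp add: norm_divide)
  qed
  define h where "h w = matrix_inv (mat 1 - msc w S) $ j $ l" for w
  have "(\<lambda>w. det (\<chi> a b. if b = j then axis l 1 $ a else (mat 1 - msc w S) $ a $ b)
            / det (mat 1 - msc w S)) holomorphic_on D"
  proof (intro holomorphic_on_divide det_holo detnz)
    fix a b
    show "(\<lambda>w. (\<chi> a b. if b = j then axis l 1 $ a else (mat 1 - msc w S) $ a $ b) $ a $ b) holomorphic_on D"
      by (cases "b = j") (auto intro!: holomorphic_intros)
    show "(\<lambda>w. (mat 1 - msc w S) $ a $ b) holomorphic_on D"
      by (auto intro!: holomorphic_intros)
  qed
  then have holo: "h holomorphic_on D"
    by (rule holomorphic_transform) (simp add: h_def inv_entry_cramer detnz)
  define F where "F = Abs_fps (\<lambda>k. mpow S k $ j $ l)"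
  have exp: "h has_fps_expansion F"
  proof (rule has_fps_expansionI)
    have nS: "0 < nu S + 1" using nu_nonneg[of S] by linarith
    have "eventually (\<lambda>u. u \<in> ball 0 (1 / (nu S + 1))) (nhds (0::complex))"
      by (intro eventually_nhds_in_open) (auto simp: nS)
    then show "eventually (\<lambda>u. (\<lambda>n. fps_nth F n * u ^ n) sums h u) (nhds 0)"
    proof eventually_elim
      case (elim u)
      have "norm u * (nu S + 1) < 1" using elim nS by (simp add: field_simps)
      then have "norm u * nu S < 1" by (smt (verit) mult_left_mono norm_ge_zero nu_nonneg)
      from bounded_linear.sums[OF bl_nth2 neumann[OF this], of j l]
      show ?case by (simp add: F_def h_def mult.commute)
    qed
  qed
  have coef: "mpow S k $ j $ l = (deriv ^^ k) h 0 / fact k" for k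
    using fps_nth_fps_expansion[OF exp, of k] by (simp add: F_def)
  have "of_real (1/\<sigma>2) \<in> ball (0::complex) (1/\<sigma>1)"
  proof -
    have "0 < \<sigma>2" using s1 rho by linarith
    then have "norm (of_real (1/\<sigma>2) :: complex) = 1/\<sigma>2" by (simp add: norm_divide)
    also have "\<dots> < 1/\<sigma>1" using s1 rho by (intro divide_strict_left_mono) auto
    finally show ?thesis by simp
  qed
  from holomorphic_power_series[OF holo[unfolded D_def] this]
  have "summable (\<lambda>n. mpow S n $ j $ l * of_real (1/\<sigma>2) ^ n)"
    by (simp add: coef sums_iff)
  then have "(\<lambda>n. mpow S n $ j $ l * of_real (1/\<sigma>2) ^ n) \<longlonglongrightarrow> 0" by (rule summable_LIMSEQ_zero)
  then have "Bseq (\<lambda>n. mpow S n $ j $ l * of_real (1/\<sigma>2) ^ n)"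
    using convergent_imp_Bseq convergentI by blast
  then obtain K where K: "\<forall>n. norm (mpow S n $ j $ l * of_real (1/\<sigma>2) ^ n) \<le> K" by (rule BseqE)
  have "norm (mpow S n $ j $ l) \<le> K * \<sigma>2 ^ n" for n
  proof -
    have s2: "\<sigma>2 > 0" using s1 rho by linarith
    have "norm (mpow S n $ j $ l) / \<sigma>2 ^ n \<le> K"
    proof -
      have "norm (of_real (1/\<sigma>2) :: complex) = 1/\<sigma>2" using s2 by (simp add: norm_divide)
      then have "norm (mpow S n $ j $ l * of_real (1/\<sigma>2) ^ n) = norm (mpow S n $ j $ l) / \<sigma>2 ^ n"
        using s2 by (simp add: norm_mult norm_power power_one_over norm_divide)
      then show ?thesis using K[rule_format, of n] by simp
    qed
    then show ?thesis using s2 by (simp add: field_simps)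
  qed
  then show ?thesis by blast
qed

lemma spectral_bound:
  fixes S :: "complex^'p^'p"
  assumes "spec S \<subseteq> ball 0 r" "r > 0"
  obtains \<sigma> C where "0 < \<sigma>" "\<sigma> < r" "\<And>k j l. norm (mpow S k $ j $ l) \<le> C * \<sigma>^k"
proof -
  obtain \<rho> where rho: "0 \<le> \<rho>" "\<rho> < r" "\<And>c. c \<in> spec S \<Longrightarrow> norm c \<le> \<rho>"
    using spec_radius[OF assms] by blast
  define \<sigma>1 where "\<sigma>1 = \<rho> + (r - \<rho>) / 3"
  define \<sigma>2 where "\<sigma>2 = \<rho> + 2 * (r - \<rho>) / 3"
  have s: "\<rho> < \<sigma>1" "\<sigma>1 < \<sigma>2" "\<sigma>2 < r" "0 < \<sigma>2" unfolding \<sigma>1_def \<sigma>2_def using rho by (auto simp: field_simps)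
  have "\<forall>j l. \<exists>K. \<forall>n. norm (mpow S n $ j $ l) \<le> K * \<sigma>2 ^ n"
    using entry_bound[OF rho(1) s(1) s(2) rho(3)] by blast
  then obtain K where K: "\<And>j l n. norm (mpow S n $ j $ l) \<le> K j l * \<sigma>2 ^ n" by metis
  define C where "C = (\<Sum>j\<in>UNIV. \<Sum>l\<in>UNIV. \<bar>K j l\<bar>)"
  have "norm (mpow S n $ j $ l) \<le> C * \<sigma>2 ^ n" for n j l
  proof -
    have "\<bar>K j l\<bar> \<le> (\<Sum>l\<in>UNIV. \<bar>K j l\<bar>)" by (rule member_le_sum) auto
    also have "\<dots> \<le> C" unfolding C_def by (rule member_le_sum) (auto intro: sum_nonneg)
    finally have "K j l * \<sigma>2 ^ n \<le> C * \<sigma>2 ^ n" using s(4)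
      by (intro mult_right_mono) auto
    then show ?thesis using K[of n j l] by linarith
  qed
  then show ?thesis using that[of \<sigma>2 C] s by blast
qed

lemma nu_mpow_bound:
  assumes "\<And>k j l. norm (mpow (S::complex^'p^'p) k $ j $ l) \<le> C * \<sigma>^k"
  shows "nu (mpow S k) \<le> (of_nat CARD('p) * of_nat CARD('p) * C) * \<sigma>^k"
proof -
  have "nu (mpow S k) \<le> (\<Sum>j\<in>(UNIV::'p set). \<Sum>l\<in>(UNIV::'p set). C * \<sigma>^k)"
    unfolding nu_def by (intro sum_mono assms)
  then show ?thesis by (simp add: mult_ac)
qed

lemma mat_powser_summable:
  assumes bound: "\<And>k j l. norm (mpow (S::complex^'p^'p) k $ j $ l) \<le> C * \<sigma>^k"
    and sb: "summable (\<lambda>k. norm (b k) * \<sigma>^k)"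
  shows "summable (\<lambda>k. msc (b k) (mpow S k))"
proof (rule summable_nu)
  define D where "D = of_nat CARD('p) * of_nat CARD('p) * C"
  have bnd: "nu (msc (b k) (mpow S k)) \<le> D * (norm (b k) * \<sigma>^k)" for k
  proof -
    have "nu (msc (b k) (mpow S k)) = norm (b k) * nu (mpow S k)" by (rule nu_msc)
    also have "\<dots> \<le> norm (b k) * (D * \<sigma>^k)"
      unfolding D_def by (intro mult_left_mono nu_mpow_bound bound) auto
    finally show ?thesis by (simp add: mult_ac)
  qed
  have sD: "summable (\<lambda>k. D * (norm (b k) * \<sigma>^k))" using sb by (rule summable_mult)
  show "summable (\<lambda>k. nu (msc (b k) (mpow S k)))"
    by (rule summable_comparison_test'[OF sD]) (simp add: nu_nonneg bnd)
qed

lemma holo_coeff_summable: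
  assumes "f holomorphic_on ball 0 r" "0 < \<sigma>" "\<sigma> < r"
  shows "summable (\<lambda>k. norm ((deriv ^^ k) f 0 / fact k) * \<sigma>^k)"
proof -
  define \<sigma>' where "\<sigma>' = (\<sigma> + r) / 2"
  have s': "0 < \<sigma>'" "\<sigma>' < r" "\<sigma> < \<sigma>'" unfolding \<sigma>'_def using assms by (auto simp: field_simps)
  have "of_real \<sigma>' \<in> ball (0::complex) r" using s' by simp
  from holomorphic_power_series[OF assms(1) this]
  have "summable (\<lambda>n. (deriv ^^ n) f 0 / fact n * of_real \<sigma>' ^ n)" by (simp add: sums_iff)
  from powser_insidea[OF this, of "of_real \<sigma>"]
  have "summable (\<lambda>n. norm ((deriv ^^ n) f 0 / fact n * of_real \<sigma> ^ n))"
    using assms s' by simp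
  moreover have eq: "\<And>n. norm ((deriv ^^ n) f 0 / fact n * of_real \<sigma> ^ n) = norm ((deriv ^^ n) f 0 / fact n) * \<sigma>^n"
    using assms(2) by (simp add: norm_mult norm_power norm_divide)
  ultimately show ?thesis by (simp only: eq)
qed

lemma summable_shift_coeff:
  assumes "summable (\<lambda>k. norm (a k) * \<sigma>^k)" "0 < \<sigma>"
  shows "summable (\<lambda>k. norm (a (Suc k)) * \<sigma>^k)"
proof -
  have "summable (\<lambda>k. norm (a (Suc k)) * \<sigma>^(Suc k))" using assms(1) by (subst summable_Suc_iff)
  then have "summable (\<lambda>k. norm (a (Suc k)) * \<sigma>^(Suc k) / \<sigma>)" by (rule summable_divide)
  then show ?thesis using assms(2) by simp
qed

lemma exp_coeff_summable: "summable (\<lambda>k. norm ((z::complex)^k / fact k) * \<sigma>^k)"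
proof -
  have "summable (\<lambda>n. inverse (fact n) * (norm z * \<sigma>)^n)" by (rule summable_exp)
  moreover have "norm (z^k / fact k) * \<sigma>^k = inverse (fact k) * (norm z * \<sigma>)^k" for k
  proof -
    have "norm (z^k / fact k) = norm z ^ k / fact k" by (simp add: norm_divide norm_power)
    then show ?thesis by (simp add: power_mult_distrib divide_inverse)
  qed
  ultimately show ?thesis by simp
qed

lemma mexp_term: "msc (1 / fact k) (mpow (msc z S) k) = msc (z^k / fact k) (mpow S k)"
  by (simp add: mpow_msc)

lemma mexp_sums:
  assumes bound: "\<And>k j l. norm (mpow (S::complex^'p^'p) k $ j $ l) \<le> C * \<sigma>^k"
  shows "(\<lambda>k. msc (z^k / fact k) (mpow S k)) sums mexp (msc z S)"
proof -
  have s: "summable (\<lambda>k. msc (z^k / fact k) (mpow S k))"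
    by (rule mat_powser_summable[OF bound exp_coeff_summable])
  show ?thesis unfolding mexp_def mexp_term using summable_sums[OF s] .
qed

lemma mpow0: "0 < k \<Longrightarrow> mpow (0::complex^'p^'p) k = 0"
  by (cases k) simp_all

lemma mexp_zero: "mexp (0::complex^'p^'p) = mat 1"
proof -
  have "(\<lambda>k. msc (1 / fact k) (mpow (0::complex^'p^'p) k)) = (\<lambda>k. if k = 0 then mat 1 else 0)"
    by (auto simp: fun_eq_iff mpow0)
  moreover have "(\<lambda>k. if k = 0 then mat 1 else (0::complex^'p^'p)) sums mat 1"
    using sums_single[of 0 "\<lambda>_. mat 1 :: complex^'p^'p"] by simp
  ultimately show ?thesis unfolding mexp_def by (simp add: sums_iff)
qed

definition Emb :: "'a \<Rightarrow> 'b \<Rightarrow> complex \<Rightarrow> complex^'b^'a" where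
  "Emb j l c = (\<chi> a b. if a = j \<and> b = l then c else 0)"

lemma bl_Emb: "bounded_linear (Emb j l)"
proof -
  have "linear (Emb j l)"
    by (rule linearI) (simp_all add: Emb_def vec_eq_iff)
  then show ?thesis by (simp add: linear_conv_bounded_linear)
qed

lemma Emb_sum: "(\<Sum>j\<in>UNIV. \<Sum>l\<in>UNIV. Emb j l (A $ j $ l)) = (A::complex^'b^'a)"
proof -
  have e: "\<And>a b j l. Emb j l (A $ j $ l) $ a $ b = (if j = a then (if l = b then A $ a $ b else 0) else 0)"
    by (auto simp: Emb_def)
  have inner: "\<And>a b j. (\<Sum>l\<in>UNIV. Emb j l (A $ j $ l) $ a $ b) = (if j = a then A $ a $ b else 0)"
    by (simp add: e)
  show ?thesis by (simp add: vec_eq_iff inner)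
qed

lemma vec2_vd:
  assumes "\<And>j l. ((\<lambda>t. \<phi> t $ j $ l) has_vector_derivative (D $ j $ l)) (at t)"
  shows "((\<phi>::real \<Rightarrow> complex^'b^'a) has_vector_derivative D) (at t)"
proof -
  have "((\<lambda>t. \<Sum>j\<in>UNIV. \<Sum>l\<in>UNIV. Emb j l (\<phi> t $ j $ l)) has_vector_derivative
          (\<Sum>j\<in>UNIV. \<Sum>l\<in>UNIV. Emb j l (D $ j $ l))) (at t)"
    by (intro has_vector_derivative_sum bounded_linear.has_vector_derivative[OF bl_Emb] assms)
  then show ?thesis by (simp add: Emb_sum)
qed

lemma mexp_deriv:
  assumes bound: "\<And>k j l. norm (mpow (S::complex^'p^'p) k $ j $ l) \<le> C * \<sigma>^k"
  shows "((\<lambda>t. mexp (msc (of_real t) S)) has_vector_derivative (mexp (msc (of_real t) S) ** S)) (at t)"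
proof (rule vec2_vd)
  fix j l
  define c where "c k = mpow S k $ j $ l / fact k" for k
  have ent: "(\<lambda>k. c k * y^k) sums (mexp (msc y S) $ j $ l)" for y
    using bounded_linear.sums[OF bl_nth2 mexp_sums[OF bound, of y], of j l]
    by (simp add: c_def mult_ac)
  have ent2: "(\<lambda>k. diffs c k * y^k) sums ((mexp (msc y S) ** S) $ j $ l)" for y
  proof -
    have "(\<lambda>k. msc (y^k / fact k) (mpow S k) ** S) sums (mexp (msc y S) ** S)"
      using bounded_linear.sums[OF bl_mult_right mexp_sums[OF bound, of y]] .
    from bounded_linear.sums[OF bl_nth2 this, of j l]
    have "(\<lambda>k. y^k / fact k * (mpow S k ** S) $ j $ l) sums ((mexp (msc y S) ** S) $ j $ l)"
      by (simp add: msc_mult_left)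
    moreover have "diffs c k * y^k = y^k / fact k * (mpow S k ** S) $ j $ l" for k
    proof -
      have nz: "(of_nat (Suc k) :: complex) \<noteq> 0" "(fact k :: complex) \<noteq> 0" by (simp_all del: of_nat_Suc)
      show ?thesis using nz
        by (simp add: diffs_def c_def mpow_Suc' divide_simps del: mpow.simps of_nat_Suc)
    qed
    ultimately show ?thesis by simp
  qed
  have "((\<lambda>x. \<Sum>n. c n * x^n) has_field_derivative (\<Sum>n. diffs c n * (of_real t)^n)) (at (of_real t))"
    by (rule termdiffs_strong_converges_everywhere) (use ent in \<open>auto simp: sums_iff\<close>)
  then have "((\<lambda>x. mexp (msc x S) $ j $ l) has_field_derivative ((mexp (msc (of_real t) S) ** S) $ j $ l)) (at (of_real t))"
    using ent ent2 by (simp add: sums_iff)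
  then show "((\<lambda>t. mexp (msc (of_real t) S) $ j $ l) has_vector_derivative (mexp (msc (of_real t) S) ** S) $ j $ l) (at t)"
    by (rule has_vector_derivative_real_field)
qed

lemma bl_sandwich: "bounded_linear (\<lambda>A::complex^'b^'a. (X::complex^'a^'c) ** A ** (Z::complex^'d^'b))"
  using bounded_linear_compose[OF bl_mult_right[of Z] bl_mult_left[of X]] by simp

lemma F_deriv:
  assumes bound: "\<And>k j l. norm (mpow (S::complex^'p^'p) k $ j $ l) \<le> C * \<sigma>^k"
  shows "((\<lambda>t. (Y::complex^'p^'n) ** mexp (msc (of_real t) S) ** (Z::complex^'q^'p)) has_vector_derivative
           (Y ** (mexp (msc (of_real t) S) ** S) ** Z)) (at t)"
  using bounded_linear.has_vector_derivative[OF bl_sandwich mexp_deriv[OF bound]] .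

lemma vder_F:
  assumes bound: "\<And>k j l. norm (mpow (S::complex^'p^'p) k $ j $ l) \<le> C * \<sigma>^k"
  shows "vder i (\<lambda>t. (Y::complex^'p^'n) ** mexp (msc (of_real t) S)) = (\<lambda>t. Y ** mexp (msc (of_real t) S) ** mpow S i)"
proof (induct i)
  case 0 then show ?case by (simp add: vder_def)
next
  case (Suc i)
  have "vder (Suc i) (\<lambda>t. Y ** mexp (msc (of_real t) S)) = (\<lambda>t. vector_derivative (vder i (\<lambda>t. Y ** mexp (msc (of_real t) S))) (at t))"
    by (simp add: vder_def)
  also have "\<dots> = (\<lambda>t. Y ** (mexp (msc (of_real t) S) ** S) ** mpow S i)"
    unfolding Suc by (intro ext vector_derivative_at F_deriv[OF bound])
  also have "\<dots> = (\<lambda>t. Y ** mexp (msc (of_real t) S) ** mpow S (Suc i))"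
    by (simp add: matrix_mul_assoc)
  finally show ?case .
qed

lemma int0_F:
  assumes bound: "\<And>k j l. norm (mpow (S::complex^'p^'p) k $ j $ l) \<le> C * \<sigma>^k"
    and inv: "invertible S"
  shows "int0 (\<lambda>t. (Y::complex^'p^'n) ** mexp (msc (of_real t) S)) \<theta>
         = Y ** mexp (msc (of_real \<theta>) S) ** matrix_inv S - Y ** matrix_inv S"
proof -
  define G where "G t = Y ** mexp (msc (of_real t) S) ** matrix_inv S" for t
  have d: "(G has_vector_derivative (Y ** mexp (msc (of_real t) S))) (at t within T)" for t T
  proof -
    have "(G has_vector_derivative (Y ** (mexp (msc (of_real t) S) ** S) ** matrix_inv S)) (at t)"
      unfolding G_def by (rule F_deriv[OF bound])
    moreover have "Y ** (mexp (msc (of_real t) S) ** S) ** matrix_inv S = Y ** mexp (msc (of_real t) S)"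
      by (simp add: matrix_mul_assoc[symmetric] inv_props[OF inv])
    ultimately show ?thesis by (simp add: has_vector_derivative_at_within)
  qed
  have G0: "G 0 = Y ** matrix_inv S" by (simp add: G_def mexp_zero)
  show ?thesis
  proof (cases "0 \<le> \<theta>")
    case True
    have "((\<lambda>t. Y ** mexp (msc (of_real t) S)) has_integral (G \<theta> - G 0)) {0..\<theta>}"
      by (rule fundamental_theorem_of_calculus[OF True d])
    then show ?thesis using True by (simp add: int0_def integral_unique G_def mexp_zero)
  next
    case False
    have "((\<lambda>t. Y ** mexp (msc (of_real t) S)) has_integral (G 0 - G \<theta>)) {\<theta>..0}"
      using False by (intro fundamental_theorem_of_calculus d) auto
    then show ?thesis using False by (simp add: int0_def integral_unique G_def mexp_zero)
  qed
qed

definition qf :: "(complex \<Rightarrow> complex) \<Rightarrow> complex \<Rightarrow> complex" where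
  "qf g z = (if z = 0 then deriv g 0 else (g z - g 0) / z)"

definition cf :: "(complex \<Rightarrow> complex) \<Rightarrow> nat \<Rightarrow> complex" where
  "cf g k = (deriv ^^ k) g 0 / fact k"

lemma qf_sums:
  assumes holo: "g holomorphic_on ball 0 r" and u: "u \<in> ball 0 r"
  shows "(\<lambda>n. cf g (Suc n) * u^n) sums qf g u"
proof (cases "u = 0")
  case True
  then show ?thesis using powser_sums_zero[of "\<lambda>n. cf g (Suc n)"] by (simp add: qf_def cf_def)
next
  case False
  have "(\<lambda>n. cf g n * u^n) sums g u"
    using holomorphic_power_series[OF holo u] by (simp add: cf_def)
  then have "(\<lambda>n. cf g (Suc n) * u^(Suc n)) sums (g u - cf g 0 * u^0)"
    by (subst sums_Suc_iff) simp
  then have "(\<lambda>n. cf g (Suc n) * u^(Suc n) / u) sums ((g u - g 0) / u)"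
    by (intro sums_divide) (simp add: cf_def)
  then show ?thesis using False by (simp add: qf_def)
qed

lemma qf_cont:
  assumes holo: "g holomorphic_on ball 0 r" and r: "r > 0"
  shows "isCont (qf g) 0"
proof -
  have "(\<lambda>z. if z = 0 then deriv g 0 else (g z - g 0) / (z - 0)) holomorphic_on ball 0 r"
    using pole_lemma_open[OF holo open_ball] .
  moreover have "(\<lambda>z. if z = 0 then deriv g 0 else (g z - g 0) / (z - 0)) = qf g"
    by (simp add: qf_def fun_eq_iff)
  ultimately have "qf g holomorphic_on ball 0 r" by simp
  then have "continuous_on (ball 0 r) (qf g)" by (rule holomorphic_on_imp_continuous_on)
  then show ?thesis using r by (simp add: continuous_on_eq_continuous_at)
qed

lemma tendsto_msc: "(c \<longlongrightarrow> c0) F \<Longrightarrow> ((\<lambda>w. msc (c w) A) \<longlongrightarrow> msc c0 A) F"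
  unfolding msc_def by (intro tendsto_intros)

lemma Bfn_eq:
  fixes Ms :: "nat \<Rightarrow> complex^'n^'n"
  assumes holo: "\<forall>i<m. f i holomorphic_on ball 0 r" and r: "r > 0"
  shows "Bfn (Mfun Ms f m) z = - (matrix_inv (Mfun Ms f m 0) ** (\<Sum>i<m. msc (qf (f i) z) (Ms i)))"
proof -
  define M0 where "M0 = Mfun Ms f m 0"
  define E where "E w = - (matrix_inv M0 ** (\<Sum>i<m. msc (qf (f i) w) (Ms i)))" for w
  have nz: "matrix_inv M0 ** msc (1 / w) (M0 - Mfun Ms f m w) = E w" if w: "w \<noteq> 0" for w
  proof -
    have "M0 - Mfun Ms f m w = (\<Sum>i<m. msc (f i 0 - f i w) (Ms i))"
      by (simp add: M0_def Mfun_def vec_eq_iff sum_subtractf left_diff_distrib)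
    then have "msc (1 / w) (M0 - Mfun Ms f m w) = (\<Sum>i<m. msc ((f i 0 - f i w) / w) (Ms i))"
      by (simp add: msc_sum)
    also have "\<dots> = (\<Sum>i<m. - msc (qf (f i) w) (Ms i))"
      using w by (intro sum.cong refl) (simp add: vec_eq_iff qf_def field_simps)
    also have "\<dots> = - (\<Sum>i<m. msc (qf (f i) w) (Ms i))" by (simp add: sum_negf)
    finally have "msc (1 / w) (M0 - Mfun Ms f m w) = - (\<Sum>i<m. msc (qf (f i) w) (Ms i))" .
    then show ?thesis by (simp add: E_def matrix_mul_minus_right)
  qed
  have "(E \<longlongrightarrow> E 0) (at 0)"
  proof -
    have "((\<lambda>w. qf (f i) w) \<longlongrightarrow> qf (f i) 0) (at 0)" if "i < m" for i
      using qf_cont[OF holo[rule_format, OF that] r] by (simp add: isCont_def)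
    then have "((\<lambda>w. \<Sum>i<m. msc (qf (f i) w) (Ms i)) \<longlongrightarrow> (\<Sum>i<m. msc (qf (f i) 0) (Ms i))) (at 0)"
      by (intro tendsto_sum tendsto_msc) auto
    from bounded_linear.tendsto[OF bl_mult_left this]
    show ?thesis unfolding E_def by (intro tendsto_minus) 
  qed
  then have "((\<lambda>w. matrix_inv M0 ** msc (1 / w) (M0 - Mfun Ms f m w)) \<longlongrightarrow> E 0) (at 0)"
    by (rule Lim_transform_eventually) (auto simp: eventually_at_filter nz)
  then have "Lim (at 0) (\<lambda>w. matrix_inv M0 ** msc (1 / w) (M0 - Mfun Ms f m w)) = E 0"
    by (intro tendsto_Lim) auto
  then show ?thesis
    by (cases "z = 0") (simp_all add: Bfn_def M0_def[symmetric] nz E_def)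
qed

lemma Bfn_entry:
  fixes Ms :: "nat \<Rightarrow> complex^'n^'n"
  assumes holo: "\<forall>i<m. f i holomorphic_on ball 0 r" and r: "r > 0"
  shows "Bfn (Mfun Ms f m) z $ j $ k = - (\<Sum>l<m. qf (f l) z * (matrix_inv (Mfun Ms f m 0) ** Ms l) $ j $ k)"
  by (simp add: Bfn_eq[OF holo r] matrix_mul_sum_right msc_mult_right)

lemma mder0_Bfn:
  fixes Ms :: "nat \<Rightarrow> complex^'n^'n"
  assumes holo: "\<forall>i<m. f i holomorphic_on ball 0 r" and r: "r > 0"
  shows "msc (1 / fact i) (mder0 (Bfn (Mfun Ms f m)) i)
         = - (matrix_inv (Mfun Ms f m 0) ** (\<Sum>l<m. msc (cf (f l) (Suc i)) (Ms l)))"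
proof -
  define N where "N = matrix_inv (Mfun Ms f m 0)"
  have "(deriv ^^ i) (\<lambda>z. Bfn (Mfun Ms f m) z $ j $ k) 0 / fact i
        = - (\<Sum>l<m. cf (f l) (Suc i) * (N ** Ms l) $ j $ k)" for j k
  proof -
    define c where "c l = (N ** Ms l) $ j $ k" for l
    define Fe where "Fe = Abs_fps (\<lambda>n. - (\<Sum>l<m. cf (f l) (Suc n) * c l))"
    have "(\<lambda>z. Bfn (Mfun Ms f m) z $ j $ k) has_fps_expansion Fe"
    proof (rule has_fps_expansionI)
      have "eventually (\<lambda>u. u \<in> ball 0 r) (nhds (0::complex))"
        using r by (intro eventually_nhds_in_open) auto
      then show "eventually (\<lambda>u. (\<lambda>n. fps_nth Fe n * u ^ n) sums Bfn (Mfun Ms f m) u $ j $ k) (nhds 0)"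
      proof eventually_elim
        case (elim u)
        have "(\<lambda>n. cf (f l) (Suc n) * u^n * c l) sums (qf (f l) u * c l)" if "l \<in> {..<m}" for l
          using that holo elim by (intro sums_mult2 qf_sums) auto
        then have "(\<lambda>n. \<Sum>l<m. cf (f l) (Suc n) * u^n * c l) sums (\<Sum>l<m. qf (f l) u * c l)"
          by (rule sums_sum)
        then have "(\<lambda>n. - (\<Sum>l<m. cf (f l) (Suc n) * u^n * c l)) sums (- (\<Sum>l<m. qf (f l) u * c l))"
          by (rule sums_minus)
        moreover have "(\<lambda>n. fps_nth Fe n * u ^ n) = (\<lambda>n. - (\<Sum>l<m. cf (f l) (Suc n) * u^n * c l))"
          by (simp add: Fe_def fun_eq_iff sum_distrib_left sum_distrib_right mult_ac)
        ultimately show ?case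
          by (simp add: Bfn_entry[OF holo r] c_def N_def)
      qed
    qed
    from fps_nth_fps_expansion[OF this, of i] show ?thesis by (simp add: Fe_def c_def)
  qed
  then show ?thesis
    by (simp add: vec_eq_iff mder0_def N_def[symmetric] matrix_mul_sum_right msc_mult_right sum_negf)
qed

lemma matfun_split:
  assumes bound: "\<And>k j l. norm (mpow (S::complex^'p^'p) k $ j $ l) \<le> C * \<sigma>^k"
    and holo: "g holomorphic_on ball 0 r" and s: "0 < \<sigma>" "\<sigma> < r"
  shows "summable (\<lambda>i. msc (cf g (Suc i)) (mpow S i))"
    and "matfun g S = msc (g 0) (mat 1) + (\<Sum>i. msc (cf g (Suc i)) (mpow S i)) ** S"
proof -
  have sc: "summable (\<lambda>k. norm (cf g k) * \<sigma>^k)"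
    using holo_coeff_summable[OF holo s] by (simp add: cf_def)
  show sR: "summable (\<lambda>i. msc (cf g (Suc i)) (mpow S i))"
    by (rule mat_powser_summable[OF bound summable_shift_coeff[OF sc s(1)]])
  have sF: "summable (\<lambda>k. msc (cf g k) (mpow S k))"
    by (rule mat_powser_summable[OF bound sc])
  have "matfun g S = (\<Sum>k. msc (cf g k) (mpow S k))" by (simp add: matfun_def cf_def)
  also have "\<dots> = msc (cf g 0) (mpow S 0) + (\<Sum>k. msc (cf g (Suc k)) (mpow S (Suc k)))"
    using suminf_split_head[OF sF] by simp
  also have "(\<lambda>k. msc (cf g (Suc k)) (mpow S (Suc k))) = (\<lambda>k. msc (cf g (Suc k)) (mpow S k) ** S)"
    by (simp add: mpow_Suc' msc_mult_left del: mpow.simps)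
  also have "(\<Sum>k. msc (cf g (Suc k)) (mpow S k) ** S) = (\<Sum>i. msc (cf g (Suc i)) (mpow S i)) ** S"
    using bounded_linear.suminf[OF bl_mult_right[where X=S] sR] by simp
  finally show "matfun g S = msc (g 0) (mat 1) + (\<Sum>i. msc (cf g (Suc i)) (mpow S i)) ** S"
    by (simp add: cf_def)
qed

theorem mainTheorem4:
  fixes r :: real and m :: nat
    and Ms :: "nat \<Rightarrow> complex^'n^'n" and f :: "nat \<Rightarrow> complex \<Rightarrow> complex"
    and Y :: "complex^'p^'n" and S :: "complex^'p^'p" and \<theta> :: real
  assumes "r > 0"
    and "\<forall>i<m. f i holomorphic_on ball 0 r"
    and "invertible (Mfun Ms f m 0)"
    and "invertible S"
    and "spec S \<subseteq> ball 0 r"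
  shows "Bop (Bfn (Mfun Ms f m)) (\<lambda>t. Y ** mexp (msc (complex_of_real t) S)) \<theta>
           - (Y ** mexp (msc (complex_of_real \<theta>) S)) ** matrix_inv S
         = - ((matrix_inv (Mfun Ms f m 0) ** (\<Sum>i<m. Ms i ** Y ** matfun (f i) S)) ** matrix_inv S)"
proof -
  note r = assms(1) and holo = assms(2) and invM = assms(3) and invS = assms(4)
  obtain \<sigma> C where s: "0 < \<sigma>" "\<sigma> < r" and bound: "\<And>k j l. norm (mpow S k $ j $ l) \<le> C * \<sigma>^k"
    using spectral_bound[OF assms(5) r] by blast
  define M0 where "M0 = Mfun Ms f m 0"
  define N where "N = matrix_inv M0"
  define Si where "Si = matrix_inv S"
  define E where "E = mexp (msc (complex_of_real \<theta>) S)"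
  define g where "g l i = msc (cf (f l) (Suc i)) (mpow S i)" for l i
  define R where "R l = (\<Sum>i. g l i)" for l
  have sg: "summable (g l)" if "l < m" for l
    unfolding g_def[abs_def] using matfun_split(1)[OF bound holo[rule_format, OF that] s] .
  have mf: "matfun (f l) S = msc (f l 0) (mat 1) + R l ** S" if "l < m" for l
    unfolding R_def g_def using matfun_split(2)[OF bound holo[rule_format, OF that] s] .
  have Rl: "R l = (matfun (f l) S - msc (f l 0) (mat 1)) ** Si" if "l < m" for l
  proof -
    have "(matfun (f l) S - msc (f l 0) (mat 1)) ** Si = R l ** S ** Si" using mf[OF that] by simp
    also have "\<dots> = R l" by (simp add: Si_def matrix_mul_assoc[symmetric] inv_props[OF invS])
    finally show ?thesis by simp
  qed
  have vd: "vder i (\<lambda>t. Y ** mexp (msc (complex_of_real t) S)) 0 = Y ** mpow S i" for i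
    by (simp add: vder_F[OF bound] mexp_zero)
  have trm: "msc (1 / fact i) (mder0 (Bfn (Mfun Ms f m)) i ** vder i (\<lambda>t. Y ** mexp (msc (complex_of_real t) S)) 0)
        = - (N ** (\<Sum>l<m. Ms l ** Y ** g l i))" for i
  proof -
    have "msc (1 / fact i) (mder0 (Bfn (Mfun Ms f m)) i ** vder i (\<lambda>t. Y ** mexp (msc (complex_of_real t) S)) 0)
        = msc (1 / fact i) (mder0 (Bfn (Mfun Ms f m)) i) ** (Y ** mpow S i)"
      by (simp add: vd msc_mult_left)
    also have "\<dots> = - (N ** (\<Sum>l<m. msc (cf (f l) (Suc i)) (Ms l))) ** (Y ** mpow S i)"
      by (simp add: mder0_Bfn[OF holo r] N_def M0_def)
    also have "\<dots> = - (N ** (\<Sum>l<m. Ms l ** Y ** g l i))"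
      by (simp add: g_def matrix_mul_minus_left matrix_mul_sum_left matrix_mul_sum_right
          msc_mult_left msc_mult_right matrix_mul_assoc)
    finally show ?thesis .
  qed
  have sg2: "summable (\<lambda>i. Ms l ** Y ** g l i)" if "l \<in> {..<m}" for l
    using bounded_linear.summable[OF bl_mult_left sg] that by auto
  have sumB: "(\<Sum>i. msc (1 / fact i) (mder0 (Bfn (Mfun Ms f m)) i ** vder i (\<lambda>t. Y ** mexp (msc (complex_of_real t) S)) 0))
        = - (N ** (\<Sum>l<m. Ms l ** Y ** R l))"
  proof -
    have s1: "summable (\<lambda>i. \<Sum>l<m. Ms l ** Y ** g l i)"
      by (rule summable_sum) (rule sg2)
    have s2: "summable (\<lambda>i. N ** (\<Sum>l<m. Ms l ** Y ** g l i))"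
      by (rule bounded_linear.summable[OF bl_mult_left[where X=N] s1])
    have "(\<Sum>i. - (N ** (\<Sum>l<m. Ms l ** Y ** g l i))) = - (\<Sum>i. N ** (\<Sum>l<m. Ms l ** Y ** g l i))"
      by (rule suminf_minus[OF s2])
    also have "(\<Sum>i. N ** (\<Sum>l<m. Ms l ** Y ** g l i)) = N ** (\<Sum>i. \<Sum>l<m. Ms l ** Y ** g l i)"
      using bounded_linear.suminf[OF bl_mult_left[where X=N] s1] by simp
    also have "(\<Sum>i. \<Sum>l<m. Ms l ** Y ** g l i) = (\<Sum>l<m. \<Sum>i. Ms l ** Y ** g l i)"
      by (rule suminf_sum) (rule sg2)
    also have "\<dots> = (\<Sum>l<m. Ms l ** Y ** R l)"
    proof (intro sum.cong refl)
      fix l assume "l \<in> {..<m}"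
      then show "(\<Sum>i. Ms l ** Y ** g l i) = Ms l ** Y ** R l"
        using bounded_linear.suminf[OF bl_mult_left sg, of l "Ms l ** Y"] by (simp add: R_def)
    qed
    finally show ?thesis by (simp add: trm)
  qed
  have M0eq: "M0 = (\<Sum>l<m. msc (f l 0) (Ms l))" by (simp add: M0_def Mfun_def)
  have K1: "(\<Sum>l<m. Ms l ** Y ** R l) = (\<Sum>l<m. Ms l ** Y ** matfun (f l) S) ** Si - M0 ** Y ** Si"
  proof -
    have "(\<Sum>l<m. Ms l ** Y ** R l) = (\<Sum>l<m. Ms l ** Y ** matfun (f l) S ** Si - msc (f l 0) (Ms l ** Y ** Si))"
      by (intro sum.cong refl) (simp add: Rl matrix_mul_diff_left matrix_mul_diff_right matrix_mul_assoc msc_mult_left msc_mult_right)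
    also have "\<dots> = (\<Sum>l<m. Ms l ** Y ** matfun (f l) S) ** Si - M0 ** Y ** Si"
      by (simp add: M0eq sum_subtractf matrix_mul_sum_left msc_mult_left)
    finally show ?thesis .
  qed
  have NM: "N ** M0 ** Y ** Si = Y ** Si"
    using inv_props(2)[OF invM] by (simp add: N_def M0_def)
  have "Bop (Bfn (Mfun Ms f m)) (\<lambda>t. Y ** mexp (msc (complex_of_real t) S)) \<theta>
        = (Y ** E ** Si - Y ** Si) + - (N ** (\<Sum>l<m. Ms l ** Y ** R l))"
    unfolding Bop_def sumB by (simp add: int0_F[OF bound invS] E_def Si_def)
  also have "\<dots> = Y ** E ** Si - Y ** Si - (N ** (\<Sum>l<m. Ms l ** Y ** matfun (f l) S)) ** Si + N ** M0 ** Y ** Si"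
    by (simp add: K1 matrix_mul_diff_right matrix_mul_assoc)
  also have "\<dots> = Y ** E ** Si - (N ** (\<Sum>l<m. Ms l ** Y ** matfun (f l) S)) ** Si"
    by (simp add: NM)
  finally show ?thesis by (simp add: E_def Si_def N_def M0_def)
qed

end
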